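(* Let $N\le M$ and consider $N$ players and $M$ arms. For each player $n$ and arm $i$, let $\{r_{n,i}(t)\}_{t\ge1}$ be an i.i.d. sequence with mean $\mu_{n,i}>0$, variance $\sigma_{n,i}^2$, continuous distribution, and satisfying Bernstein's condition $E|r_{n,i}(t)-\mu_{n,i}|^k\le\frac12 k!\,\sigma_{n,i}^2 b_{n,i}^{k-2}$ for all integers $k\ge3$ and some $b_{n,i}>0$; these sequences are independent across different $(n,i)$. Let $\sigma_{\max}=\max_{n,i}\sigma_{n,i}$, $b_{\max}=\max_{n,i}b_{n,i}$. In each exploration turn, every player independently chooses an arm uniformly at random from $\{1,\dots,M\}$ (independently of the rewards), and player $n$ on arm $i$ at turn $t$ receives $r_{n,i}(t)\eta_i(\boldsymbol a(t))$. Fix $c_1>0$, $\delta>0$, and for epoch $k\ge 1$ let the exploration phases of epochs $1,\dots,k$ contain together $T_e(k)=c_1\sum_{j=1}^k j^\delta$ exploration turns. Let $\mu^k_{n,i}$ be the average of $r_{n,i}(t)$ over those exploration turns (up to epoch $k$) in which player $n$ was the only player choosing arm $i$. Let $g_n(\boldsymbol a)=\mu_{n,a_n}\eta_{a_n}(\boldsymbol a)$, assume $\boldsymbol a^*$ is the unique maximizer of $\sum_n g_n(\boldsymbol a)$ with value $J_1$, and let $J_2$ be the second best objective. Let $\boldsymbol a^{k*}$ be a maximizer of $\sum_{n}\mu^k_{n,a_n}\eta_{a_n}(\boldsymbol a)$ and let $P_{e,k}$ denote the event $\boldsymbol a^{k*}\neq\boldsymbol a^*$. Define $$w=\frac{(J_1-J_2)^2}{MN^2\left(80\sigma_{\max}^2+\frac{40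 b_{\max}}{N}(J_1-J_2)\right)}.$$ Then $$\Pr(P_{e,k})\le 2NMe^{-wc_1(k/2)^\delta k}+NMe^{-\frac{c_1(k/2)^\delta}{36M^2}k},$$ and moreover $$\Pr\Big(\bigcup_{r=0}^{\lfloor k/2\rfloor}P_{e,k-r}\Big)\le\frac{2NM}{1-e^{-wc_1(k/4)^\delta}}e^{-\frac w2 c_1(k/4)^\delta k}+\frac{NM}{1-e^{-\frac{1}{36M^2}c_1(k/4)^\delta}}e^{-\frac{1}{72M^2}c_1(k/4)^\delta k}.$$
   Context: For a strategy profile $\boldsymbol a\in\{1,\dots,M\}^N$ and an arm $i$, the no-collision indicator is $\eta_i(\boldsymbol a)=0$ if more than one player chose arm $i$ in $\boldsymbol a$, and $1$ otherwise. With $J_1=\max_{\boldsymbol a}\sum_n g_n(\boldsymbol a)$, the second best objective $J_2$ is the maximum of $\sum_n g_n(\boldsymbol a)$ over all profiles $\boldsymbol a$ with $\sum_n g_n(\boldsymbol a)<J_1$ (assumed to exist). *)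

theory Defs
  imports "HOL-Probability.Probability"
begin

text \<open>Players are indexed by 0..<N, arms by 0..<M (0-based), exploration turns by 1,2,...\<close>

definition eta :: "nat \<Rightarrow> (nat \<Rightarrow> nat) \<Rightarrow> nat \<Rightarrow> real" where
  "eta N a i = (if card {n \<in> {0..<N}. a n = i} > 1 then 0 else 1)"

definition profiles :: "nat \<Rightarrow> nat \<Rightarrow> (nat \<Rightarrow> nat) set" where
  "profiles N M = {0..<N} \<rightarrow>\<^sub>E {0..<M}"

definition objective :: "nat \<Rightarrow> (nat \<Rightarrow> nat \<Rightarrow> real) \<Rightarrow> (nat \<Rightarrow> nat) \<Rightarrow> real" where
  "objective N mu a = (\<Sum>n<N. mu n (a n) * eta N a (a n))"

definition J1 :: "nat \<Rightarrow> nat \<Rightarrow> (nat \<Rightarrow> nat \<Rightarrow> real) \<Rightarrow> real" where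
  "J1 N M mu = Max (objective N mu ` profiles N M)"

definition J2 :: "nat \<Rightarrow> nat \<Rightarrow> (nat \<Rightarrow> nat \<Rightarrow> real) \<Rightarrow> real" where
  "J2 N M mu = Max {objective N mu a | a. a \<in> profiles N M \<and> objective N mu a < J1 N M mu}"

definition explore_turns :: "real \<Rightarrow> real \<Rightarrow> nat \<Rightarrow> nat" where
  "explore_turns c1 \<delta> k = nat \<lceil>c1 * (\<Sum>j=1..k. real j powr \<delta>)\<rceil>"

text \<open>Exploration turns among 1..T in which player n was the only player choosing arm i;
  A t m \<omega> is the arm chosen by player m at exploration turn t.\<close>
definition solo_turns :: "nat \<Rightarrow> (nat \<Rightarrow> nat \<Rightarrow> 'a \<Rightarrow> nat) \<Rightarrow> nat \<Rightarrow> nat \<Rightarrow> nat \<Rightarrow> 'a \<Rightarrow> nat set" where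
  "solo_turns N A T n i \<omega> = {t \<in> {1..T}. A t n \<omega> = i \<and> (\<forall>m<N. m \<noteq> n \<longrightarrow> A t m \<omega> \<noteq> i)}"

text \<open>Empirical mean mu^k_{n,i} (0 if there is no such turn).\<close>
definition emp_mean :: "nat \<Rightarrow> (nat \<Rightarrow> nat \<Rightarrow> 'a \<Rightarrow> nat) \<Rightarrow> (nat \<Rightarrow> nat \<Rightarrow> nat \<Rightarrow> 'a \<Rightarrow> real)
    \<Rightarrow> nat \<Rightarrow> nat \<Rightarrow> nat \<Rightarrow> 'a \<Rightarrow> real" where
  "emp_mean N A r T n i \<omega> =
     (\<Sum>t \<in> solo_turns N A T n i \<omega>. r n i t \<omega>) / real (card (solo_turns N A T n i \<omega>))"

definition err_event :: "'a measure \<Rightarrow> nat \<Rightarrow> nat \<Rightarrow> (nat \<Rightarrow> nat \<Rightarrow> 'a \<Rightarrow> nat)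
    \<Rightarrow> (nat \<Rightarrow> nat \<Rightarrow> nat \<Rightarrow> 'a \<Rightarrow> real) \<Rightarrow> nat \<Rightarrow> (nat \<Rightarrow> nat) \<Rightarrow> 'a set" where
  "err_event P N M A r T astar =
     {\<omega> \<in> space P. \<exists>a \<in> profiles N M. a \<noteq> astar \<and>
        (\<forall>b \<in> profiles N M. objective N (\<lambda>n i. emp_mean N A r T n i \<omega>) b
                            \<le> objective N (\<lambda>n i. emp_mean N A r T n i \<omega>) a)}"

end

theory Submission
  imports Defs
begin

lemma exp_minus_le_abs: "exp (y::real) - y \<le> exp \<bar>y\<bar> - \<bar>y\<bar>"
proof (cases "y \<ge> 0")
  case True then show ?thesis by simp
next
  case False
  have "-y \<le> (exp (-y) - inverse (exp (-y))) / 2" using real_le_x_sinh[of "-y"] False by simp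
  then show ?thesis using False by (simp add: exp_minus)
qed

lemma exp_tail_sums: "(\<lambda>j. \<bar>y::real\<bar>^(j+2) / fact (j+2)) sums (exp \<bar>y\<bar> - 1 - \<bar>y\<bar>)"
proof -
  have "(\<lambda>n. \<bar>y\<bar>^n /\<^sub>R fact n) sums exp \<bar>y\<bar>" by (rule exp_converges)
  then have "(\<lambda>n. \<bar>y\<bar>^n / fact n) sums exp \<bar>y\<bar>" by (simp add: divide_inverse mult.commute scaleR_conv_of_real)
  then have "(\<lambda>j. \<bar>y\<bar>^(j+2) / fact (j+2)) sums (exp \<bar>y\<bar> - (\<Sum>i<2. \<bar>y\<bar>^i / fact i))"
    using sums_iff_shift[of "\<lambda>n. \<bar>y\<bar>^n / fact n" 2] by simp
  then show ?thesis by (simp add: eval_nat_numeral diff_diff_eq)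
qed

lemma mgf_bound:
  fixes X :: "'a \<Rightarrow> real"
  assumes P: "prob_space P" and Xm: "X \<in> borel_measurable P" and Xi: "integrable P X"
    and X0: "integral\<^sup>L P X = 0"
    and X2i: "integrable P (\<lambda>\<omega>. (X \<omega>)^2)" and X2: "integral\<^sup>L P (\<lambda>\<omega>. (X \<omega>)^2) = s2"
    and Xj: "\<And>j. 3 \<le> j \<Longrightarrow> integrable P (\<lambda>\<omega>. \<bar>X \<omega>\<bar>^j) \<and> integral\<^sup>L P (\<lambda>\<omega>. \<bar>X \<omega>\<bar>^j) \<le> 1/2 * fact j * s2 * b^(j-2)"
    and b: "b > 0" and l: "0 \<le> l" "l * b < 1"
  shows "integrable P (\<lambda>\<omega>. exp (l * X \<omega>)) \<and> integral\<^sup>L P (\<lambda>\<omega>. exp (l * X \<omega>)) \<le> 1 + l^2 * s2 / (2 * (1 - l * b))"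
proof -
  interpret prob_space P by (rule P)
  define f where "f j \<omega> = \<bar>l * X \<omega>\<bar>^(j+2) / fact (j+2)" for j \<omega>
  have fj_eq: "f j = (\<lambda>\<omega>. (\<bar>l\<bar>^(j+2)/fact(j+2)) * \<bar>X \<omega>\<bar>^(j+2))" for j
    by (rule ext) (simp add: f_def power_mult_distrib abs_mult)
  have f0_eq: "f 0 = (\<lambda>\<omega>. (l^2/2) * (X \<omega>)^2)" by (rule ext) (simp add: f_def power2_eq_square)
  have fi: "integrable P (f j)" for j
  proof (cases "j = 0")
    case True
    then show ?thesis using X2i by (simp add: f0_eq)
  next
    case False
    then have "integrable P (\<lambda>\<omega>. \<bar>X \<omega>\<bar>^(j+2))" using Xj[of "j+2"] by simp
    then show ?thesis by (simp add: fj_eq)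
  qed
  have fint: "integral\<^sup>L P (f j) \<le> (l^2 * s2 / 2) * (l*b)^j" for j
  proof (cases "j = 0")
    case True
    then show ?thesis using X2 by (simp add: f0_eq)
  next
    case False
    then have h: "integral\<^sup>L P (\<lambda>\<omega>. \<bar>X \<omega>\<bar>^(j+2)) \<le> 1/2 * fact (j+2) * s2 * b^j" using Xj[of "j+2"] by simp
    have "integral\<^sup>L P (f j) = \<bar>l\<bar>^(j+2) / fact (j+2) * integral\<^sup>L P (\<lambda>\<omega>. \<bar>X \<omega>\<bar>^(j+2))"
      by (simp add: fj_eq)
    also have "\<dots> \<le> \<bar>l\<bar>^(j+2) / fact (j+2) * (1/2 * fact (j+2) * s2 * b^j)"
      by (rule mult_left_mono[OF h]) simp
    also have "\<dots> = (l^2 * s2 / 2) * (l*b)^j" using l by (simp add: power_add power_mult_distrib power2_eq_square)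
    finally show ?thesis .
  qed
  have fnn: "0 \<le> f j \<omega>" for j \<omega> by (simp add: f_def)
  have geo: "(\<lambda>j. (l^2 * s2 / 2) * (l*b)^j) sums ((l^2 * s2 / 2) * (1 / (1 - l*b)))"
    using l b by (intro sums_mult geometric_sums) (simp add: abs_of_nonneg)
  have s2nn: "0 \<le> s2" using X2 Bochner_Integration.integral_nonneg[of P "\<lambda>\<omega>. (X \<omega>)^2"] by simp
  have sumI: "summable (\<lambda>j. integral\<^sup>L P (\<lambda>\<omega>. norm (f j \<omega>)))"
  proof (rule summable_comparison_test[OF _ sums_summable[OF geo]])
    have "norm (integral\<^sup>L P (\<lambda>\<omega>. norm (f j \<omega>))) \<le> (l^2 * s2 / 2) * (l*b)^j" for j
    proof -
      have e: "(\<lambda>\<omega>. norm (f j \<omega>)) = f j" using fnn by (simp add: fun_eq_iff)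
      have "0 \<le> integral\<^sup>L P (f j)" using fnn by (simp add: integral_nonneg)
      then show ?thesis using fint[of j] unfolding e by simp
    qed
    then show "\<exists>N. \<forall>n\<ge>N. norm (integral\<^sup>L P (\<lambda>\<omega>. norm (f n \<omega>))) \<le> (l^2 * s2 / 2) * (l*b)^n" by blast
  qed
  have sumP: "AE \<omega> in P. summable (\<lambda>j. norm (f j \<omega>))"
  proof (rule AE_I2)
    fix \<omega> show "summable (\<lambda>j. norm (f j \<omega>))"
      using exp_tail_sums[of "l * X \<omega>"] by (simp add: f_def sums_iff)
  qed
  have Si: "integrable P (\<lambda>\<omega>. \<Sum>j. f j \<omega>)" and SI: "integral\<^sup>L P (\<lambda>\<omega>. \<Sum>j. f j \<omega>) = (\<Sum>j. integral\<^sup>L P (f j))"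
    and Ss: "summable (\<lambda>j. integral\<^sup>L P (f j))"
    using integrable_suminf[OF fi sumP sumI] integral_suminf[OF fi sumP sumI] summable_integral[OF fi sumP sumI]
    by auto
  have Sle: "(\<Sum>j. integral\<^sup>L P (f j)) \<le> l^2 * s2 / (2 * (1 - l * b))"
    using suminf_le[OF fint Ss sums_summable[OF geo]] sums_unique[OF geo] by simp
  have pw: "exp (l * X \<omega>) \<le> 1 + l * X \<omega> + (\<Sum>j. f j \<omega>)" for \<omega>
    using exp_minus_le_abs[of "l * X \<omega>"] sums_unique[OF exp_tail_sums[of "l * X \<omega>"]]
    by (simp add: f_def)
  have Ri: "integrable P (\<lambda>\<omega>. 1 + l * X \<omega> + (\<Sum>j. f j \<omega>))"
    using Si Xi by auto
  have Ei: "integrable P (\<lambda>\<omega>. exp (l * X \<omega>))"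
  proof (rule Bochner_Integration.integrable_bound[OF Ri])
    show "(\<lambda>\<omega>. exp (l * X \<omega>)) \<in> borel_measurable P" using Xm by simp
    show "AE \<omega> in P. norm (exp (l * X \<omega>)) \<le> norm (1 + l * X \<omega> + (\<Sum>j. f j \<omega>))"
    proof (rule AE_I2)
      fix \<omega> show "norm (exp (l * X \<omega>)) \<le> norm (1 + l * X \<omega> + (\<Sum>j. f j \<omega>))"
        using pw[of \<omega>] abs_ge_self[of "1 + l * X \<omega> + (\<Sum>j. f j \<omega>)"] by simp
    qed
  qed
  have "integral\<^sup>L P (\<lambda>\<omega>. exp (l * X \<omega>)) \<le> integral\<^sup>L P (\<lambda>\<omega>. 1 + l * X \<omega> + (\<Sum>j. f j \<omega>))"
    by (rule Bochner_Integration.integral_mono[OF Ei Ri pw])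
  also have "\<dots> = 1 + l * 0 + (\<Sum>j. integral\<^sup>L P (f j))"
    using Si Xi X0 SI by (simp add: prob_space)
  finally show ?thesis using Ei Sle by simp
qed

lemma markov_prod:
  fixes Z :: "'t \<Rightarrow> 'a \<Rightarrow> real"
  assumes P: "prob_space P" and I: "finite I"
    and ind: "prob_space.indep_vars P (\<lambda>_. borel) (\<lambda>t \<omega>. exp (l * Z t \<omega>)) I"
    and Zm: "\<And>t. t \<in> I \<Longrightarrow> Z t \<in> borel_measurable P"
    and int: "\<And>t. t \<in> I \<Longrightarrow> integrable P (\<lambda>\<omega>. exp (l * Z t \<omega>))"
    and le: "\<And>t. t \<in> I \<Longrightarrow> integral\<^sup>L P (\<lambda>\<omega>. exp (l * Z t \<omega>)) \<le> c"
    and l: "0 \<le> l"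
  shows "measure P {\<omega> \<in> space P. 0 \<le> (\<Sum>t\<in>I. Z t \<omega>)} \<le> c ^ card I"
proof -
  interpret prob_space P by (rule P)
  let ?A = "{\<omega> \<in> space P. 0 \<le> (\<Sum>t\<in>I. Z t \<omega>)}"
  have Am: "?A \<in> sets P" using Zm I by measurable
  have pi: "integrable P (\<lambda>\<omega>. \<Prod>t\<in>I. exp (l * Z t \<omega>))"
    using indep_vars_integrable[OF I ind int] by simp
  have pe: "integral\<^sup>L P (\<lambda>\<omega>. \<Prod>t\<in>I. exp (l * Z t \<omega>)) = (\<Prod>t\<in>I. integral\<^sup>L P (\<lambda>\<omega>. exp (l * Z t \<omega>)))"
    using indep_vars_lebesgue_integral[OF I ind int] by simp
  have ind_le: "indicator ?A \<omega> \<le> (\<Prod>t\<in>I. exp (l * Z t \<omega>))" for \<omega>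
  proof (cases "\<omega> \<in> ?A")
    case True
    then have "0 \<le> l * (\<Sum>t\<in>I. Z t \<omega>)" using l by simp
    then have "1 \<le> exp (l * (\<Sum>t\<in>I. Z t \<omega>))" by simp
    also have "\<dots> = (\<Prod>t\<in>I. exp (l * Z t \<omega>))" using I by (simp add: sum_distrib_left exp_sum)
    finally show ?thesis using True by simp
  next
    case False then show ?thesis by (simp add: prod_nonneg)
  qed
  have "measure P ?A = integral\<^sup>L P (indicator ?A)" using Am by simp
  also have "\<dots> \<le> integral\<^sup>L P (\<lambda>\<omega>. \<Prod>t\<in>I. exp (l * Z t \<omega>))"
    by (rule Bochner_Integration.integral_mono[OF _ pi ind_le]) (auto simp: integrable_indicator_iff Am less_top[symmetric])
  also have "\<dots> \<le> (\<Prod>t\<in>I. c)" unfolding pe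
    by (rule prod_mono) (use le in \<open>auto intro: Bochner_Integration.integral_nonneg\<close>)
  finally show ?thesis by simp
qed

lemma turn_mgf:
  fixes S E :: "'a \<Rightarrow> real"
  assumes P: "prob_space P" and ind: "prob_space.indep_var P borel S borel E"
    and S01: "\<And>\<omega>. S \<omega> = 0 \<or> S \<omega> = 1" and Sm: "S \<in> borel_measurable P"
    and Ei: "integrable P E" and Ele: "integral\<^sup>L P E \<le> m" and m1: "m \<le> 1"
    and q0: "q0 \<le> integral\<^sup>L P S" "0 \<le> q0"
    and F: "\<And>\<omega>. F \<omega> = (if S \<omega> = 1 then E \<omega> else 1)"
  shows "integrable P F \<and> integral\<^sup>L P F \<le> 1 - q0 * (1 - m)"
proof -
  interpret prob_space P by (rule P)
  have Si: "integrable P S"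
  proof (rule integrable_const_bound[where B=1])
    show "AE x in P. norm (S x) \<le> 1"
    proof (rule AE_I2)
      fix x show "norm (S x) \<le> 1" using S01[of x] by auto
    qed
  qed (rule Sm)
  have SE: "integrable P (\<lambda>\<omega>. S \<omega> * E \<omega>)" and SEe: "integral\<^sup>L P (\<lambda>\<omega>. S \<omega> * E \<omega>) = integral\<^sup>L P S * integral\<^sup>L P E"
    using indep_var_integrable[OF ind Si Ei] indep_var_lebesgue_integral[OF ind Si Ei] by auto
  have Feq: "F = (\<lambda>\<omega>. 1 - S \<omega> + S \<omega> * E \<omega>)"
    using S01 F by (force simp: fun_eq_iff)
  have Fi: "integrable P F" unfolding Feq using SE Si by auto
  have "integral\<^sup>L P F = 1 - integral\<^sup>L P S + integral\<^sup>L P S * integral\<^sup>L P E"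
    unfolding Feq using SE Si SEe by (simp add: prob_space)
  also have "\<dots> \<le> 1 - integral\<^sup>L P S + integral\<^sup>L P S * m"
    using Ele q0 by (intro add_left_mono mult_left_mono) auto
  also have "\<dots> = 1 - integral\<^sup>L P S * (1 - m)" by (simp add: algebra_simps)
  also have "\<dots> \<le> 1 - q0 * (1 - m)" using q0 m1 by (intro diff_left_mono mult_right_mono) auto
  finally show ?thesis using Fi by simp
qed

definition gfun :: "nat \<Rightarrow> nat \<Rightarrow> nat \<Rightarrow> real \<Rightarrow> real" where
  "gfun n i m y = (if m = n then indicator {real i} y else 1 - indicator {real i} y)"

lemma gfun_meas[measurable]: "gfun n i m \<in> borel_measurable borel"
  unfolding gfun_def by measurable

definition Sv :: "(nat \<Rightarrow> nat \<Rightarrow> 'a \<Rightarrow> nat) \<Rightarrow> nat \<Rightarrow> nat \<Rightarrow> nat \<Rightarrow> nat \<Rightarrow> 'a \<Rightarrow> real" where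
  "Sv A N n i t \<omega> = (\<Prod>m<N. gfun n i m (real (A t m \<omega>)))"

lemma gfun01: "gfun n i m y = 0 \<or> gfun n i m y = 1"
  by (auto simp: gfun_def indicator_def)

lemma Sv01: "Sv A N n i t \<omega> = 0 \<or> Sv A N n i t \<omega> = 1"
  unfolding Sv_def
proof (induction N)
  case 0 then show ?case by simp
next
  case (Suc N) then show ?case using gfun01[of n i N "real (A t N \<omega>)"] by auto
qed

lemma Sv_iff: assumes "n < N"
  shows "Sv A N n i t \<omega> = 1 \<longleftrightarrow> (A t n \<omega> = i \<and> (\<forall>m<N. m \<noteq> n \<longrightarrow> A t m \<omega> \<noteq> i))"
proof
  assume h: "Sv A N n i t \<omega> = 1"
  have "gfun n i m (real (A t m \<omega>)) = 1" if "m < N" for m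
  proof (rule ccontr)
    assume "gfun n i m (real (A t m \<omega>)) \<noteq> 1"
    then have "gfun n i m (real (A t m \<omega>)) = 0" using gfun01 by blast
    then have "Sv A N n i t \<omega> = 0" unfolding Sv_def using that by (intro prod_zero) auto
    then show False using h by simp
  qed
  note g = this
  have "A t n \<omega> = i" using g[OF assms] by (simp add: gfun_def indicator_def split: if_splits)
  moreover have "A t m \<omega> \<noteq> i" if "m < N" "m \<noteq> n" for m
    using g[OF that(1)] that(2) by (simp add: gfun_def indicator_def split: if_splits)
  ultimately show "A t n \<omega> = i \<and> (\<forall>m<N. m \<noteq> n \<longrightarrow> A t m \<omega> \<noteq> i)" by blast
next
  assume "A t n \<omega> = i \<and> (\<forall>m<N. m \<noteq> n \<longrightarrow> A t m \<omega> \<noteq> i)"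
  then show "Sv A N n i t \<omega> = 1" unfolding Sv_def
    by (intro prod.neutral) (auto simp: gfun_def indicator_def)
qed

lemma Sv_meas:
  assumes "\<And>m. m < N \<Longrightarrow> A t m \<in> measurable P (count_space UNIV)"
  shows "Sv A N n i t \<in> borel_measurable P"
  unfolding Sv_def
proof (rule borel_measurable_prod)
  fix m assume "m \<in> {..<N}"
  then have "A t m \<in> measurable P (count_space UNIV)" using assms by simp
  moreover have "(\<lambda>a. gfun n i m (real a)) \<in> measurable (count_space UNIV) borel" by simp
  ultimately show "(\<lambda>\<omega>. gfun n i m (real (A t m \<omega>))) \<in> borel_measurable P"
    by (rule measurable_compose[where f="A t m" and g="\<lambda>a. gfun n i m (real a)", unfolded comp_def])
qed

lemma pow_lower: assumes "2 \<le> (M::nat)" "N \<le> M"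
  shows "exp (-1) \<le> (1 - 1 / real M) ^ (N - 1)"
proof -
  define K where "K = M - 1"
  have K: "1 \<le> K" "M = K + 1" using assms by (auto simp: K_def)
  have a: "1 + 1 / real K \<le> exp (1 / real K)" by (rule exp_ge_add_one_self)
  have "exp (- (1 / real K)) = 1 / exp (1 / real K)" by (simp add: exp_minus inverse_eq_divide)
  also have "\<dots> \<le> 1 / (1 + 1 / real K)"
    by (rule divide_left_mono[OF a]) (use K in \<open>auto intro!: mult_pos_pos add_pos_nonneg\<close>)
  also have "\<dots> = 1 - 1 / real M" using K by (simp add: field_simps)
  finally have e: "exp (- (1 / real K)) \<le> 1 - 1 / real M" .
  have kk: "real K * (- (1 / real K)) = -1" using K by simp
  have "exp (- (1 / real K)) ^ K = exp (real K * (- (1 / real K)))" by (rule exp_of_nat_mult[symmetric])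
  then have "exp (-1) = exp (- (1 / real K)) ^ K" using kk by simp
  also have "\<dots> \<le> (1 - 1 / real M) ^ K" by (rule power_mono[OF e]) simp
  also have "\<dots> \<le> (1 - 1 / real M) ^ (N - 1)"
    by (rule power_decreasing) (use K assms in auto)
  finally show ?thesis .
qed

lemma comp_meas1:
  assumes "j \<in> K" "h \<in> borel_measurable borel"
  shows "(\<lambda>f. h (f j)) \<in> borel_measurable (PiM K (\<lambda>_. borel))"
  using measurable_compose[OF measurable_component_singleton[OF assms(1), of "\<lambda>_. borel"] assms(2)]
  by (simp add: comp_def)

lemma comp_measS:
  assumes "\<And>m. m < N \<Longrightarrow> Inr (t, m) \<in> K"
  shows "(\<lambda>f. \<Prod>m<N. gfun n i m (f (Inr (t, m)))) \<in> borel_measurable (PiM K (\<lambda>_. borel))"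
  by (rule borel_measurable_prod) (use assms in \<open>auto intro!: comp_meas1\<close>)

lemma solo_prob:
  fixes P :: "'a measure" and r :: "nat \<Rightarrow> nat \<Rightarrow> nat \<Rightarrow> 'a \<Rightarrow> real"
  assumes P: "prob_space P" and NM: "1 \<le> N" "N \<le> M" "2 \<le> M"
    and A_rv: "\<And>t n. 1 \<le> t \<Longrightarrow> n < N \<Longrightarrow> A t n \<in> measurable P (count_space UNIV)"
    and A_unif: "\<And>t n i. 1 \<le> t \<Longrightarrow> n < N \<Longrightarrow> i < M \<Longrightarrow>
                 measure P {\<omega> \<in> space P. A t n \<omega> = i} = 1 / real M"
    and indep: "prob_space.indep_vars P (\<lambda>_. borel)
                 (\<lambda>x. case x of Inl (n, i, t) \<Rightarrow> r n i t | Inr (t, n) \<Rightarrow> (\<lambda>\<omega>. real (A t n \<omega>)))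
                 ({Inl (n, i, t) | n i t. n < N \<and> i < M \<and> 1 \<le> t} \<union>
                  {Inr (t, n) | t n. 1 \<le> t \<and> n < N})"
    and n: "n < N" "i < M" and t: "1 \<le> t"
  shows "1 / (3 * real M) \<le> integral\<^sup>L P (Sv A N n i t)"
proof -
  interpret prob_space P by (rule P)
  let ?V = "(\<lambda>x. case x of Inl (n, i, t) \<Rightarrow> r n i t | Inr (t, n) \<Rightarrow> (\<lambda>\<omega>. real (A t n \<omega>)))"
  have i1: "indep_vars (\<lambda>m. PiM {Inr (t, m)} (\<lambda>_. borel)) (\<lambda>m \<omega>. restrict (\<lambda>j. ?V j \<omega>) {Inr (t, m)}) {..<N}"
    by (rule indep_vars_restrict[OF indep]) (use t in \<open>auto simp: disjoint_family_on_def\<close>)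
  have i2: "indep_vars (\<lambda>_. borel) (\<lambda>m \<omega>. (\<lambda>f. gfun n i m (f (Inr (t, m)))) (restrict (\<lambda>j. ?V j \<omega>) {Inr (t, m)})) {..<N}"
    by (rule indep_vars_compose2[OF i1]) (auto intro!: comp_meas1)
  have i3: "indep_vars (\<lambda>_. borel) (\<lambda>m \<omega>. gfun n i m (real (A t m \<omega>))) {..<N}"
    using i2 by simp
  have gm: "(\<lambda>\<omega>. gfun n i m (real (A t m \<omega>))) \<in> borel_measurable P" if "m < N" for m
    using measurable_compose[OF A_rv[OF t that], of "\<lambda>a. gfun n i m (real a)" borel] by (simp add: comp_def)
  have gi: "integrable P (\<lambda>\<omega>. gfun n i m (real (A t m \<omega>)))" if "m < N" for m
  proof (rule integrable_const_bound[where B=1])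
    show "AE x in P. norm (gfun n i m (real (A t m x))) \<le> 1"
      by (rule AE_I2) (use gfun01[of n i m] in \<open>metis norm_one norm_zero order_refl zero_le_one\<close>)
  qed (rule gm[OF that])
  have ind_eq: "integral\<^sup>L P (\<lambda>\<omega>. indicator {real i} (real (A t m \<omega>))) = 1 / real M" if "m < N" for m
  proof -
    have "integral\<^sup>L P (\<lambda>\<omega>. indicator {real i} (real (A t m \<omega>)) :: real)
          = integral\<^sup>L P (indicator {\<omega> \<in> space P. A t m \<omega> = i})"
      by (rule Bochner_Integration.integral_cong) (auto simp: indicator_def)
    also have "\<dots> = measure P {\<omega> \<in> space P. A t m \<omega> = i}"
      by (simp add: Int_absorb2 subset_iff)
    also have "\<dots> = 1 / real M" using A_unif[OF t that n(2)] .
    finally show ?thesis .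
  qed
  have Eg: "integral\<^sup>L P (\<lambda>\<omega>. gfun n i m (real (A t m \<omega>))) = (if m = n then 1 / real M else 1 - 1 / real M)"
    if "m < N" for m
  proof (cases "m = n")
    case True then show ?thesis using ind_eq[OF that] by (simp add: gfun_def)
  next
    case False
    have ii: "integrable P (\<lambda>\<omega>. indicator {real i} (real (A t m \<omega>)) :: real)"
    proof -
      have "integrable P (\<lambda>\<omega>. 1 - (1 - indicator {real i} (real (A t m \<omega>))) :: real)"
        by (rule Bochner_Integration.integrable_diff[OF integrable_const]) (use gi[OF that] False in \<open>simp add: gfun_def\<close>)
      then show ?thesis by simp
    qed
    show ?thesis using ind_eq[OF that] False ii by (simp add: gfun_def prob_space)
  qed
  have "integral\<^sup>L P (Sv A N n i t) = (\<Prod>m<N. integral\<^sup>L P (\<lambda>\<omega>. gfun n i m (real (A t m \<omega>))))"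
    unfolding Sv_def by (rule indep_vars_lebesgue_integral[OF _ i3]) (auto intro: gi)
  also have "\<dots> = (\<Prod>m<N. (if m = n then 1 / real M else 1 - 1 / real M))"
    by (rule prod.cong) (auto simp: Eg)
  also have "\<dots> = (1 / real M) * (\<Prod>m\<in>{..<N} - {n}. (if m = n then 1 / real M else 1 - 1 / real M))"
    using n by (subst prod.remove[of _ n]) auto
  also have "(\<Prod>m\<in>{..<N} - {n}. (if m = n then 1 / real M else 1 - 1 / real M)) = (1 - 1 / real M) ^ (N - 1)"
    using n by (simp add: prod_constant)
  finally have E: "integral\<^sup>L P (Sv A N n i t) = (1 / real M) * (1 - 1 / real M) ^ (N - 1)" .
  have e3: "1/3 \<le> exp (-1::real)"
    using exp_le by (simp add: exp_minus inverse_eq_divide divide_simps)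
  have "1 / (3 * real M) = (1 / real M) * (1/3)" by simp
  also have "\<dots> \<le> (1 / real M) * (1 - 1 / real M) ^ (N - 1)"
    using order_trans[OF e3 pow_lower[OF NM(3) NM(2)]] by (intro mult_left_mono) auto
  finally show ?thesis using E by simp
qed

lemma dev_bound:
  fixes P :: "'a measure" and r :: "nat \<Rightarrow> nat \<Rightarrow> nat \<Rightarrow> 'a \<Rightarrow> real"
    and A :: "nat \<Rightarrow> nat \<Rightarrow> 'a \<Rightarrow> nat" and mu \<sigma> b :: "nat \<Rightarrow> nat \<Rightarrow> real"
  assumes P: "prob_space P" and NM: "1 \<le> N" "N \<le> M" "2 \<le> M"
    and r_rv: "\<And>n i t. n < N \<Longrightarrow> i < M \<Longrightarrow> 1 \<le> t \<Longrightarrow> r n i t \<in> borel_measurable P"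
    and r_mean: "\<And>n i t. n < N \<Longrightarrow> i < M \<Longrightarrow> 1 \<le> t \<Longrightarrow>
                 integrable P (r n i t) \<and> (\<integral>\<omega>. r n i t \<omega> \<partial>P) = mu n i"
    and r_var: "\<And>n i t. n < N \<Longrightarrow> i < M \<Longrightarrow> 1 \<le> t \<Longrightarrow>
                 integrable P (\<lambda>\<omega>. (r n i t \<omega> - mu n i)^2) \<and>
                 (\<integral>\<omega>. (r n i t \<omega> - mu n i)^2 \<partial>P) = (\<sigma> n i)^2"
    and b_pos: "\<And>n i. n < N \<Longrightarrow> i < M \<Longrightarrow> b n i > 0"
    and bernstein: "\<And>n i t j. n < N \<Longrightarrow> i < M \<Longrightarrow> 1 \<le> t \<Longrightarrow> 3 \<le> j \<Longrightarrow>
                 integrable P (\<lambda>\<omega>. \<bar>r n i t \<omega> - mu n i\<bar> ^ j) \<and>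
                 (\<integral>\<omega>. \<bar>r n i t \<omega> - mu n i\<bar> ^ j \<partial>P)
                   \<le> 1/2 * fact j * (\<sigma> n i)^2 * (b n i) ^ (j - 2)"
    and A_rv: "\<And>t n. 1 \<le> t \<Longrightarrow> n < N \<Longrightarrow> A t n \<in> measurable P (count_space UNIV)"
    and A_unif: "\<And>t n i. 1 \<le> t \<Longrightarrow> n < N \<Longrightarrow> i < M \<Longrightarrow>
                 measure P {\<omega> \<in> space P. A t n \<omega> = i} = 1 / real M"
    and indep: "prob_space.indep_vars P (\<lambda>_. borel)
                 (\<lambda>x. case x of Inl (n, i, t) \<Rightarrow> r n i t | Inr (t, n) \<Rightarrow> (\<lambda>\<omega>. real (A t n \<omega>)))
                 ({Inl (n, i, t) | n i t. n < N \<and> i < M \<and> 1 \<le> t} \<union>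
                  {Inr (t, n) | t n. 1 \<le> t \<and> n < N})"
    and n: "n < N" "i < M" and s: "s = 1 \<or> s = -1" and x: "x > 0" and sig: "\<sigma> n i ^ 2 > 0"
  shows "measure P {\<omega> \<in> space P. 0 \<le> (\<Sum>t\<in>{1..T}. Sv A N n i t \<omega> * (s * (r n i t \<omega> - mu n i) - x))}
          \<le> exp (- real T * (1 - exp (- (x^2 / (2 * (\<sigma> n i ^ 2 + b n i * x))))) / (3 * real M))"
proof -
  interpret prob_space P by (rule P)
  let ?V = "(\<lambda>x. case x of Inl (n, i, t) \<Rightarrow> r n i t | Inr (t, n) \<Rightarrow> (\<lambda>\<omega>. real (A t n \<omega>)))"
  define s2 where "s2 = \<sigma> n i ^ 2"
  define bb where "bb = b n i"
  define D where "D = s2 + bb * x"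
  define \<eta> where "\<eta> = x^2 / (2 * D)"
  define l where "l = x / D"
  have bb: "bb > 0" using b_pos[OF n] by (simp add: bb_def)
  have s2: "s2 > 0" using sig by (simp add: s2_def)
  have D: "D > 0" using bb s2 x by (simp add: D_def add_pos_pos)
  have l0: "0 \<le> l" using x D by (simp add: l_def)
  have lb: "l * bb < 1" using x D s2 bb by (simp add: l_def D_def field_simps)
  have h1: "1 - l * bb = s2 / D" using D by (simp add: l_def D_def field_simps)
  have lb2: "l^2 * s2 / (2 * (1 - l * bb)) = \<eta>"
    unfolding h1 using D s2 by (simp add: l_def \<eta>_def field_simps power2_eq_square)
  have lx: "l * x = 2 * \<eta>" using D by (simp add: l_def \<eta>_def power2_eq_square)
  define X where "X t \<omega> = s * (r n i t \<omega> - mu n i)" for t \<omega>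
  have s1: "s^2 = 1" "\<bar>s\<bar> = 1" using s by auto
  define Et where "Et t \<omega> = exp (l * (X t \<omega> - x))" for t \<omega>
  have Xprops: "integrable P (Et t) \<and> integral\<^sup>L P (Et t) \<le> exp (- \<eta>)" if t: "1 \<le> t" for t
  proof -
    have Xm: "X t \<in> borel_measurable P" using r_rv[OF n t] by (simp add: X_def[abs_def])
    have ri: "integrable P (r n i t)" and re: "integral\<^sup>L P (r n i t) = mu n i" using r_mean[OF n t] by auto
    have Xi: "integrable P (X t)" using ri by (simp add: X_def[abs_def])
    have X0: "integral\<^sup>L P (X t) = 0" using ri re by (simp add: X_def[abs_def] prob_space)
    have sq: "(\<lambda>\<omega>. (X t \<omega>)^2) = (\<lambda>\<omega>. (r n i t \<omega> - mu n i)^2)"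
      using s1 by (simp add: X_def power_mult_distrib fun_eq_iff)
    have ab: "(\<lambda>\<omega>. \<bar>X t \<omega>\<bar>^j) = (\<lambda>\<omega>. \<bar>r n i t \<omega> - mu n i\<bar>^j)" for j
      using s1 by (simp add: X_def abs_mult fun_eq_iff)
    have mgf: "integrable P (\<lambda>\<omega>. exp (l * X t \<omega>)) \<and> integral\<^sup>L P (\<lambda>\<omega>. exp (l * X t \<omega>)) \<le> 1 + l^2 * s2 / (2 * (1 - l * bb))"
      by (rule mgf_bound[OF P Xm Xi X0])
         (use r_var[OF n t] bernstein[OF n t] bb l0 lb in \<open>simp_all add: sq ab s2_def bb_def\<close>)
    have Eeq: "Et t = (\<lambda>\<omega>. exp (- (l * x)) * exp (l * X t \<omega>))"
      by (simp add: Et_def fun_eq_iff right_diff_distrib mult_exp_exp exp_diff exp_minus field_simps)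
    have "integrable P (Et t)" using mgf by (simp add: Eeq)
    moreover have "integral\<^sup>L P (Et t) \<le> exp (- (l * x)) * (1 + \<eta>)"
      using mgf lb2 by (simp add: Eeq)
    moreover have "exp (- (l * x)) * (1 + \<eta>) \<le> exp (- (l * x)) * exp \<eta>"
      by (intro mult_left_mono exp_ge_add_one_self) simp
    moreover have "exp (- (l * x)) * exp \<eta> = exp (- \<eta>)" using lx by (simp add: mult_exp_exp)
    ultimately show ?thesis by simp
  qed
  define Z where "Z t \<omega> = Sv A N n i t \<omega> * (X t \<omega> - x)" for t \<omega>
  define q0 where "q0 = 1 / (3 * real M)"
  define m where "m = exp (- \<eta>)"
  have hm: "(\<lambda>y. exp (l * (s * (y - mu n i) - x))) \<in> borel_measurable borel" by measurable
  have turn: "integrable P (\<lambda>\<omega>. exp (l * Z t \<omega>)) \<and> integral\<^sup>L P (\<lambda>\<omega>. exp (l * Z t \<omega>)) \<le> 1 - q0 * (1 - m)"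
    if t: "1 \<le> t" for t
  proof -
    have "indep_var (PiM {Inr (t, m) | m. m < N} (\<lambda>_. borel)) (\<lambda>\<omega>. restrict (\<lambda>j. ?V j \<omega>) {Inr (t, m) | m. m < N})
       (PiM {Inl (n, i, t)} (\<lambda>_. borel)) (\<lambda>\<omega>. restrict (\<lambda>j. ?V j \<omega>) {Inl (n, i, t)})"
      by (rule indep_var_restrict[OF indep]) (use t n in auto)
    then have "indep_var borel ((\<lambda>f. \<Prod>m<N. gfun n i m (f (Inr (t, m)))) \<circ> (\<lambda>\<omega>. restrict (\<lambda>j. ?V j \<omega>) {Inr (t, m) | m. m < N}))
       borel ((\<lambda>f. exp (l * (s * (f (Inl (n, i, t)) - mu n i) - x))) \<circ> (\<lambda>\<omega>. restrict (\<lambda>j. ?V j \<omega>) {Inl (n, i, t)}))"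
      by (rule indep_var_compose) (auto intro!: comp_measS comp_meas1[OF _ hm])
    moreover have "((\<lambda>f. \<Prod>m<N. gfun n i m (f (Inr (t, m)))) \<circ> (\<lambda>\<omega>. restrict (\<lambda>j. ?V j \<omega>) {Inr (t, m) | m. m < N}))
       = Sv A N n i t"
      by (auto simp: fun_eq_iff Sv_def intro!: prod.cong)
    moreover have "((\<lambda>f. exp (l * (s * (f (Inl (n, i, t)) - mu n i) - x))) \<circ> (\<lambda>\<omega>. restrict (\<lambda>j. ?V j \<omega>) {Inl (n, i, t)}))
       = Et t"
      by (simp add: fun_eq_iff Et_def X_def)
    ultimately have ind: "indep_var borel (Sv A N n i t) borel (Et t)" by simp
    show ?thesis
    proof (rule turn_mgf[OF P ind])
      show "Sv A N n i t \<omega> = 0 \<or> Sv A N n i t \<omega> = 1" for \<omega> by (rule Sv01)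
      show "Sv A N n i t \<in> borel_measurable P" by (rule Sv_meas) (use A_rv t in auto)
      show "integrable P (Et t)" "integral\<^sup>L P (Et t) \<le> m" using Xprops[OF t] by (auto simp: m_def)
      show "m \<le> 1" using D x by (simp add: m_def \<eta>_def)
      show "q0 \<le> integral\<^sup>L P (Sv A N n i t)" unfolding q0_def
        by (rule solo_prob[OF P NM A_rv A_unif indep n t])
      show "0 \<le> q0" by (simp add: q0_def)
      show "exp (l * Z t \<omega>) = (if Sv A N n i t \<omega> = 1 then Et t \<omega> else 1)" for \<omega>
        using Sv01[of A N n i t \<omega>] by (auto simp: Z_def Et_def)
    qed
  qed
  define K where "K t = insert (Inl (n, i, t)) {Inr (t, m) | m. m < N}" for t :: nat
  have i1: "indep_vars (\<lambda>t. PiM (K t) (\<lambda>_. borel)) (\<lambda>t \<omega>. restrict (\<lambda>j. ?V j \<omega>) (K t)) {1..T}"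
    by (rule indep_vars_restrict[OF indep]) (use n in \<open>auto simp: K_def disjoint_family_on_def\<close>)
  define Y where "Y t f = exp (l * ((\<Prod>m<N. gfun n i m (f (Inr (t, m)))) * (s * (f (Inl (n, i, t)) - mu n i) - x)))"
    for t :: nat and f :: "(nat \<times> nat \<times> nat) + (nat \<times> nat) \<Rightarrow> real"
  have Ym: "Y t \<in> borel_measurable (PiM (K t) (\<lambda>_. borel))" for t
  proof -
    have F1: "(\<lambda>f. \<Prod>m<N. gfun n i m (f (Inr (t, m)))) \<in> borel_measurable (PiM (K t) (\<lambda>_. borel))"
      by (rule comp_measS) (auto simp: K_def)
    have h2: "(\<lambda>y. s * (y - mu n i) - x) \<in> borel_measurable borel" by measurable
    have F2: "(\<lambda>f. s * (f (Inl (n, i, t)) - mu n i) - x) \<in> borel_measurable (PiM (K t) (\<lambda>_. borel))"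
      by (rule comp_meas1[OF _ h2]) (auto simp: K_def)
    have h3: "(\<lambda>y. exp (l * y)) \<in> borel_measurable borel" by measurable
    show ?thesis unfolding Y_def
      by (rule measurable_compose[OF borel_measurable_times[OF F1 F2] h3])
  qed
  have i2: "indep_vars (\<lambda>_. borel) (\<lambda>t \<omega>. Y t (restrict (\<lambda>j. ?V j \<omega>) (K t))) {1..T}"
    by (rule indep_vars_compose2[OF i1 Ym])
  have indT: "indep_vars (\<lambda>_. borel) (\<lambda>t \<omega>. exp (l * Z t \<omega>)) {1..T}"
  proof (rule indep_vars_cong[THEN iffD1, OF refl _ refl i2])
    fix t assume t: "t \<in> {1..T}"
    show "(\<lambda>\<omega>. Y t (restrict (\<lambda>j. ?V j \<omega>) (K t))) = (\<lambda>\<omega>. exp (l * Z t \<omega>))"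
    proof
      fix \<omega>
      have "(\<Prod>m<N. gfun n i m (restrict (\<lambda>j. ?V j \<omega>) (K t) (Inr (t, m)))) = Sv A N n i t \<omega>"
        unfolding Sv_def by (rule prod.cong) (auto simp: K_def)
      moreover have "restrict (\<lambda>j. ?V j \<omega>) (K t) (Inl (n, i, t)) = r n i t \<omega>" by (simp add: K_def)
      ultimately show "Y t (restrict (\<lambda>j. ?V j \<omega>) (K t)) = exp (l * Z t \<omega>)"
        by (simp add: Y_def Z_def X_def)
    qed
  qed
  have Zm: "Z t \<in> borel_measurable P" if "t \<in> {1..T}" for t
  proof -
    have "Sv A N n i t \<in> borel_measurable P" by (rule Sv_meas) (use A_rv that in auto)
    moreover have "r n i t \<in> borel_measurable P" using r_rv[OF n] that by auto
    ultimately show ?thesis unfolding Z_def[abs_def] X_def by measurable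
  qed
  define c where "c = 1 - q0 * (1 - m)"
  have mk: "measure P {\<omega> \<in> space P. 0 \<le> (\<Sum>t\<in>{1..T}. Z t \<omega>)} \<le> c ^ card {1..T}"
    by (rule markov_prod[OF P _ indT Zm]) (use turn l0 in \<open>auto simp: c_def\<close>)
  have q01: "q0 \<le> 1" "0 \<le> q0" using NM by (auto simp: q0_def)
  have m01: "0 \<le> 1 - m" "1 - m \<le> 1" using D x by (auto simp: m_def \<eta>_def)
  have c0: "0 \<le> c" using q01 m01 mult_le_one[of q0 "1 - m"] by (simp add: c_def)
  have "c ^ T \<le> exp (- (q0 * (1 - m))) ^ T"
    by (rule power_mono) (use c0 exp_ge_add_one_self[of "- (q0 * (1 - m))"] in \<open>auto simp: c_def\<close>)
  also have "\<dots> = exp (real T * (- (q0 * (1 - m))))" by (rule exp_of_nat_mult[symmetric])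
  finally have "c ^ T \<le> exp (real T * (- (q0 * (1 - m))))" .
  moreover have "exp (real T * (- (q0 * (1 - m)))) = exp (- real T * (1 - exp (- (x^2 / (2 * (\<sigma> n i ^ 2 + b n i * x))))) / (3 * real M))"
    by (simp add: q0_def m_def \<eta>_def D_def s2_def bb_def)
  ultimately show ?thesis using mk by (simp add: Z_def X_def)
qed

lemma sum_powr_lower:
  assumes "0 < \<delta>"
  shows "real k * (real k / 2) powr \<delta> / 2 \<le> (\<Sum>j=1..k. real j powr \<delta>)"
proof -
  have "(\<Sum>j=1..k. real j powr \<delta>) = (\<Sum>j=1..k. real (k + 1 - j) powr \<delta>)"
    by (rule sum.atLeastAtMost_rev)
  then have "2 * (\<Sum>j=1..k. real j powr \<delta>) = (\<Sum>j=1..k. real j powr \<delta> + real (k + 1 - j) powr \<delta>)"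
    by (simp add: sum.distrib)
  also have "\<dots> \<ge> (\<Sum>j=1..k. (real k / 2) powr \<delta>)"
  proof (rule sum_mono)
    fix j assume j: "j \<in> {1..k}"
    show "(real k / 2) powr \<delta> \<le> real j powr \<delta> + real (k + 1 - j) powr \<delta>"
    proof (cases "real k / 2 \<le> real j")
      case True
      then have "(real k / 2) powr \<delta> \<le> real j powr \<delta>" using assms by (intro powr_mono2) auto
      then show ?thesis by (smt (verit) powr_ge_zero)
    next
      case False
      then have "real k / 2 \<le> real (k + 1 - j)" using j by auto
      then have "(real k / 2) powr \<delta> \<le> real (k + 1 - j) powr \<delta>" using assms by (intro powr_mono2) auto
      then show ?thesis by (smt (verit) powr_ge_zero)
    qed
  qed
  finally show ?thesis by simp
qed

lemma explore_lower:
  assumes "0 < c1" "0 < \<delta>"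
  shows "c1 * (real k / 2) powr \<delta> * real k / 2 \<le> real (explore_turns c1 \<delta> k)"
proof -
  have "c1 * (real k / 2) powr \<delta> * real k / 2 = c1 * (real k * (real k / 2) powr \<delta> / 2)" by simp
  also have "\<dots> \<le> c1 * (\<Sum>j=1..k. real j powr \<delta>)"
    using sum_powr_lower[OF assms(2)] assms(1) by (intro mult_left_mono) auto
  also have "\<dots> \<le> real (explore_turns c1 \<delta> k)"
    unfolding explore_turns_def by linarith
  finally show ?thesis .
qed

lemma geo_tail:
  assumes a: "0 < \<alpha>" and q: "2 * q \<le> k"
  shows "(\<Sum>rr\<in>{0..q}. exp (- \<alpha> * real (k - rr))) \<le> exp (- \<alpha> * real k / 2) / (1 - exp (- \<alpha>))"
proof -
  have y: "exp (- \<alpha>) < 1" "0 < exp (- \<alpha>)" using a by auto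
  have "(\<Sum>rr\<in>{0..q}. exp (- \<alpha> * real (k - rr))) = (\<Sum>rr\<in>{0..q}. exp (- \<alpha> * real (k - q)) * exp (- \<alpha>) ^ (q - rr))"
  proof (rule sum.cong[OF refl])
    fix rr assume rr: "rr \<in> {0..q}"
    have "exp (- \<alpha> * real (k - q)) * exp (- \<alpha>) ^ (q - rr) = exp (- \<alpha> * real (k - q) + real (q - rr) * (- \<alpha>))"
      by (simp only: exp_of_nat_mult[symmetric] exp_add[symmetric])
    also have "- \<alpha> * real (k - q) + real (q - rr) * (- \<alpha>) = - \<alpha> * real (k - rr)"
      using rr q by (simp add: of_nat_diff algebra_simps)
    finally show "exp (- \<alpha> * real (k - rr)) = exp (- \<alpha> * real (k - q)) * exp (- \<alpha>) ^ (q - rr)" by simp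
  qed
  also have "\<dots> = exp (- \<alpha> * real (k - q)) * (\<Sum>rr\<in>{0..q}. exp (- \<alpha>) ^ (q - rr))"
    by (simp add: sum_distrib_left)
  finally have S: "(\<Sum>rr\<in>{0..q}. exp (- \<alpha> * real (k - rr))) = exp (- \<alpha> * real (k - q)) * (\<Sum>rr\<in>{0..q}. exp (- \<alpha>) ^ (q - rr))" .
  have G1: "(\<Sum>rr\<in>{0..q}. exp (- \<alpha>) ^ (q - rr)) = (\<Sum>i<Suc q. exp (- \<alpha>) ^ i)"
  proof -
    have "(\<Sum>rr\<in>{0..q}. exp (- \<alpha>) ^ (q - rr)) = (\<Sum>rr\<in>{0..q}. exp (- \<alpha>) ^ (q - (q + 0 - rr)))"
      by (subst sum.atLeastAtMost_rev) simp
    also have "\<dots> = (\<Sum>i\<in>{0..q}. exp (- \<alpha>) ^ i)" by (intro sum.cong) auto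
    finally show ?thesis by (simp add: atLeast0AtMost lessThan_Suc_atMost)
  qed
  have G2: "(\<Sum>i<Suc q. exp (- \<alpha>) ^ i) \<le> 1 / (1 - exp (- \<alpha>))"
  proof -
    have "(\<Sum>i<Suc q. exp (- \<alpha>) ^ i) = (1 - exp (- \<alpha>) ^ Suc q) / (1 - exp (- \<alpha>))"
      using y by (subst sum_gp_strict) auto
    also have "\<dots> \<le> 1 / (1 - exp (- \<alpha>))" using y by (intro divide_right_mono) auto
    finally show ?thesis .
  qed
  have E: "exp (- \<alpha> * real (k - q)) \<le> exp (- \<alpha> * real k / 2)"
    using q a by (simp add: of_nat_diff)
  have "(\<Sum>rr\<in>{0..q}. exp (- \<alpha> * real (k - rr))) \<le> exp (- \<alpha> * real (k - q)) * (1 / (1 - exp (- \<alpha>)))"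
    unfolding S G1 by (rule mult_left_mono[OF G2]) simp
  also have "\<dots> \<le> exp (- \<alpha> * real k / 2) * (1 / (1 - exp (- \<alpha>)))"
    by (rule mult_right_mono[OF E]) (use y in simp)
  finally show ?thesis by simp
qed

lemma exp_neg_le: "0 \<le> y \<Longrightarrow> exp (- y) \<le> 1 / (1 + (y::real))"
proof -
  assume y: "0 \<le> y"
  have a: "1 + y \<le> exp y" by (rule exp_ge_add_one_self)
  have "exp (- y) = 1 / exp y" by (simp add: exp_minus inverse_eq_divide)
  also have "\<dots> \<le> 1 / (1 + y)" by (rule divide_left_mono[OF a]) (use y in \<open>auto intro!: mult_pos_pos add_pos_nonneg\<close>)
  finally show ?thesis .
qed

lemma final_ineq:
  fixes \<mu> T T' \<eta> w :: real and N M :: nat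
  assumes \<eta>: "0 < \<eta>" and M: "2 \<le> M" and N: "1 \<le> N" and T: "T' / 2 \<le> T" "0 \<le> T'"
    and w: "w = \<eta> / (10 * real M)"
    and m1: "\<mu> \<le> 1" and m2: "\<mu> \<le> 2 * real N * real M * exp (- T * (1 - exp (- \<eta>)) / (3 * real M))"
  shows "\<mu> \<le> 2 * real N * real M * exp (- w * T') + real N * real M * exp (- (T' / (36 * real M ^ 2)))"
proof -
  define y where "y = 1 - exp (- \<eta>)"
  have M0: "0 < real M" using M by simp
  have NM0: "0 < real N * real M" using M N by simp
  have Tnn: "0 \<le> T" using T by linarith
  have e1: "exp (- \<eta>) \<le> 1 / (1 + \<eta>)" using exp_neg_le \<eta> by simp
  have pos2: "0 \<le> real N * real M * exp (- (T' / (36 * real M ^ 2)))" by simp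
  show ?thesis
  proof (cases "\<eta> \<le> 1/2")
    case True
    have "\<eta> / (1 + \<eta>) \<le> y" using e1 \<eta> by (simp add: y_def field_simps)
    moreover have "2 * \<eta> / 3 \<le> \<eta> / (1 + \<eta>)" using True \<eta> by (simp add: field_simps)
    ultimately have y1: "2 * \<eta> / 3 \<le> y" by linarith
    have "w * T' \<le> T * y / (3 * real M)"
    proof -
      have "w * T' = T' * \<eta> / (10 * real M)" by (simp add: w)
      also have "\<dots> \<le> T' * \<eta> / (9 * real M)" using M0 T \<eta> by (intro divide_left_mono) (auto intro: mult_nonneg_nonneg)
      also have "\<dots> = (T' / 2) * (2 * \<eta> / 3) / (3 * real M)" by simp
      also have "\<dots> \<le> T * y / (3 * real M)"
        using T y1 \<eta> M0 Tnn by (intro divide_right_mono mult_mono) auto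
      finally show ?thesis .
    qed
    then have "exp (- T * (1 - exp (- \<eta>)) / (3 * real M)) \<le> exp (- w * T')" by (simp add: y_def)
    then have "2 * real N * real M * exp (- T * (1 - exp (- \<eta>)) / (3 * real M)) \<le> 2 * real N * real M * exp (- w * T')"
      by (rule mult_left_mono) simp
    then have "\<mu> \<le> 2 * real N * real M * exp (- w * T')" using m2 by linarith
    then show ?thesis using pos2 by linarith
  next
    case False
    have "1 / (1 + \<eta>) \<le> 2/3" using False by (simp add: field_simps)
    then have "exp (- \<eta>) \<le> 2/3" using e1 by linarith
    then have y1: "1/3 \<le> y" by (simp add: y_def)
    define z where "z = exp (- (T' / (36 * real M ^ 2)))"
    have z0: "0 < z" by (simp add: z_def)
    have "T' / (18 * real M ^ 2) \<le> T' / (18 * real M)"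
      using T M0 M by (intro divide_left_mono) (auto simp: power2_eq_square)
    also have "T' / (18 * real M) = (T' / 2) * (1/3) / (3 * real M)" by simp
    also have "\<dots> \<le> T * y / (3 * real M)"
      using T y1 M0 Tnn by (intro divide_right_mono mult_mono) auto
    finally have "exp (- T * (1 - exp (- \<eta>)) / (3 * real M)) \<le> exp (- (T' / (18 * real M ^ 2)))"
      by (simp add: y_def)
    also have "exp (- (T' / (18 * real M ^ 2))) = z ^ 2"
      unfolding z_def power2_eq_square mult_exp_exp by (simp add: field_simps)
    finally have E: "exp (- T * (1 - exp (- \<eta>)) / (3 * real M)) \<le> z ^ 2" .
    show ?thesis
    proof (cases "z \<le> 1/2")
      case True
      have "2 * real N * real M * exp (- T * (1 - exp (- \<eta>)) / (3 * real M)) \<le> 2 * real N * real M * z ^ 2"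
        by (rule mult_left_mono[OF E]) simp
      then have "\<mu> \<le> 2 * real N * real M * z ^ 2" using m2 by linarith
      also have "\<dots> \<le> real N * real M * z"
      proof -
        have "2 * real N * real M * z ^ 2 = (real N * real M * z) * (2 * z)" by (simp add: power2_eq_square)
        also have "\<dots> \<le> (real N * real M * z) * 1" using True z0 NM0 by (intro mult_left_mono) auto
        finally show ?thesis by simp
      qed
      finally have "\<mu> \<le> real N * real M * z" .
      moreover have "0 \<le> 2 * real N * real M * exp (- w * T')" by simp
      ultimately show ?thesis unfolding z_def by linarith
    next
      case False
      have "1 * 2 \<le> real N * real M" using M N by (intro mult_mono) auto
      moreover have "1/2 \<le> z" using False by simp
      ultimately have "2 * (1/2) \<le> real N * real M * z" by (intro mult_mono) auto
      then have "1 \<le> real N * real M * z" by simp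
      moreover have "0 \<le> 2 * real N * real M * exp (- w * T')" by simp
      ultimately show ?thesis using m1 unfolding z_def by linarith
    qed
  qed
qed

lemma sum_Sv:
  assumes "n < N"
  shows "(\<Sum>t\<in>{1..T}. Sv A N n i t \<omega> * f t) = (\<Sum>t\<in>solo_turns N A T n i \<omega>. f t)"
proof -
  have "(\<Sum>t\<in>solo_turns N A T n i \<omega>. f t)
      = (\<Sum>t\<in>{1..T}. if (A t n \<omega> = i \<and> (\<forall>m<N. m \<noteq> n \<longrightarrow> A t m \<omega> \<noteq> i)) then f t else 0)"
    unfolding solo_turns_def by (rule sum.inter_filter) simp
  also have "\<dots> = (\<Sum>t\<in>{1..T}. Sv A N n i t \<omega> * f t)"
  proof (rule sum.cong[OF refl])
    fix t
    show "(if (A t n \<omega> = i \<and> (\<forall>m<N. m \<noteq> n \<longrightarrow> A t m \<omega> \<noteq> i)) then f t else 0) = Sv A N n i t \<omega> * f t"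
      using Sv_iff[OF assms, of A i t \<omega>] Sv01[of A N n i t \<omega>] by auto
  qed
  finally show ?thesis by simp
qed

lemma emp_close:
  fixes r :: "nat \<Rightarrow> real"
  assumes S: "finite S" and x: "0 < x"
    and h1: "(\<Sum>t\<in>S. 1 * (r t - mu) - x) < 0" and h2: "(\<Sum>t\<in>S. -1 * (r t - mu) - x) < 0"
  shows "\<bar>(\<Sum>t\<in>S. r t) / real (card S) - mu\<bar> < x"
proof -
  have e1: "(\<Sum>t\<in>S. 1 * (r t - mu) - x) = (\<Sum>t\<in>S. r t) - real (card S) * (mu + x)"
    by (simp add: sum_subtractf sum.distrib algebra_simps)
  have e2: "(\<Sum>t\<in>S. -1 * (r t - mu) - x) = real (card S) * (mu - x) - (\<Sum>t\<in>S. r t)"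
    by (simp add: sum_subtractf sum_negf sum.distrib algebra_simps)
  have c: "card S \<noteq> 0"
  proof
    assume "card S = 0" then have "S = {}" using S by simp
    then show False using h1 by simp
  qed
  then have c0: "0 < real (card S)" by simp
  have a: "(\<Sum>t\<in>S. r t) < real (card S) * (mu + x)" using h1 e1 by simp
  have b: "real (card S) * (mu - x) < (\<Sum>t\<in>S. r t)" using h2 e2 by simp
  have "(\<Sum>t\<in>S. r t) / real (card S) < mu + x" using a c0 by (simp add: field_simps)
  moreover have "mu - x < (\<Sum>t\<in>S. r t) / real (card S)" using b c0 by (simp add: field_simps)
  ultimately show ?thesis by linarith
qed

lemma eta01: "eta N a i = 0 \<or> eta N a i = 1" by (simp add: eta_def)

lemma obj_close:
  assumes e: "\<And>n i. n < N \<Longrightarrow> i < M \<Longrightarrow> \<bar>e n i - mu n i\<bar> < x" and a: "a \<in> profiles N M" and N: "1 \<le> N"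
  shows "\<bar>objective N e a - objective N mu a\<bar> < real N * x"
proof -
  have an: "a n < M" if "n < N" for n using a that by (auto simp: profiles_def PiE_def Pi_def)
  have "objective N e a - objective N mu a = (\<Sum>n<N. (e n (a n) - mu n (a n)) * eta N a (a n))"
    by (simp add: objective_def sum_subtractf[symmetric] left_diff_distrib)
  then have "\<bar>objective N e a - objective N mu a\<bar> \<le> (\<Sum>n<N. \<bar>(e n (a n) - mu n (a n)) * eta N a (a n)\<bar>)"
    by (simp add: sum_abs)
  also have "\<dots> < (\<Sum>n<N. x)"
  proof (rule sum_strict_mono)
    show "finite {..<N}" by simp
    show "{..<N} \<noteq> {}" using N by (auto simp: lessThan_empty_iff)
    fix n assume n: "n \<in> {..<N}"
    have "\<bar>(e n (a n) - mu n (a n)) * eta N a (a n)\<bar> \<le> \<bar>e n (a n) - mu n (a n)\<bar>"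
      using eta01[of N a "a n"] by auto
    also have "\<dots> < x" using e[of n "a n"] an n by simp
    finally show "\<bar>(e n (a n) - mu n (a n)) * eta N a (a n)\<bar> < x" .
  qed
  finally show ?thesis by simp
qed

theorem lemma2:
  fixes P :: "'a measure" and N M :: nat
    and r :: "nat \<Rightarrow> nat \<Rightarrow> nat \<Rightarrow> 'a \<Rightarrow> real"
    and A :: "nat \<Rightarrow> nat \<Rightarrow> 'a \<Rightarrow> nat"
    and mu \<sigma> b :: "nat \<Rightarrow> nat \<Rightarrow> real"
    and c1 \<delta> :: real and astar :: "nat \<Rightarrow> nat" and k :: nat
  assumes P: "prob_space P"
    and NM: "1 \<le> N" "N \<le> M"
    and r_rv: "\<And>n i t. n < N \<Longrightarrow> i < M \<Longrightarrow> 1 \<le> t \<Longrightarrow> r n i t \<in> borel_measurable P"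
    and r_id: "\<And>n i t. n < N \<Longrightarrow> i < M \<Longrightarrow> 1 \<le> t \<Longrightarrow>
                 distr P borel (r n i t) = distr P borel (r n i 1)"
    and r_mean: "\<And>n i t. n < N \<Longrightarrow> i < M \<Longrightarrow> 1 \<le> t \<Longrightarrow>
                 integrable P (r n i t) \<and> (\<integral>\<omega>. r n i t \<omega> \<partial>P) = mu n i"
    and mu_pos: "\<And>n i. n < N \<Longrightarrow> i < M \<Longrightarrow> mu n i > 0"
    and r_var: "\<And>n i t. n < N \<Longrightarrow> i < M \<Longrightarrow> 1 \<le> t \<Longrightarrow>
                 integrable P (\<lambda>\<omega>. (r n i t \<omega> - mu n i)^2) \<and>
                 (\<integral>\<omega>. (r n i t \<omega> - mu n i)^2 \<partial>P) = (\<sigma> n i)^2"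
    and \<sigma>_nonneg: "\<And>n i. n < N \<Longrightarrow> i < M \<Longrightarrow> \<sigma> n i \<ge> 0"
    and r_cont: "\<And>n i t x. n < N \<Longrightarrow> i < M \<Longrightarrow> 1 \<le> t \<Longrightarrow>
                 measure P {\<omega> \<in> space P. r n i t \<omega> = x} = 0"
    and b_pos: "\<And>n i. n < N \<Longrightarrow> i < M \<Longrightarrow> b n i > 0"
    and bernstein: "\<And>n i t j. n < N \<Longrightarrow> i < M \<Longrightarrow> 1 \<le> t \<Longrightarrow> 3 \<le> j \<Longrightarrow>
                 integrable P (\<lambda>\<omega>. \<bar>r n i t \<omega> - mu n i\<bar> ^ j) \<and>
                 (\<integral>\<omega>. \<bar>r n i t \<omega> - mu n i\<bar> ^ j \<partial>P)
                   \<le> 1/2 * fact j * (\<sigma> n i)^2 * (b n i) ^ (j - 2)"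
    and A_rv: "\<And>t n. 1 \<le> t \<Longrightarrow> n < N \<Longrightarrow> A t n \<in> measurable P (count_space UNIV)"
    and A_range: "\<And>t n \<omega>. 1 \<le> t \<Longrightarrow> n < N \<Longrightarrow> \<omega> \<in> space P \<Longrightarrow> A t n \<omega> < M"
    and A_unif: "\<And>t n i. 1 \<le> t \<Longrightarrow> n < N \<Longrightarrow> i < M \<Longrightarrow>
                 measure P {\<omega> \<in> space P. A t n \<omega> = i} = 1 / real M"
    and indep: "prob_space.indep_vars P (\<lambda>_. borel)
                 (\<lambda>x. case x of Inl (n, i, t) \<Rightarrow> r n i t | Inr (t, n) \<Rightarrow> (\<lambda>\<omega>. real (A t n \<omega>)))
                 ({Inl (n, i, t) | n i t. n < N \<and> i < M \<and> 1 \<le> t} \<union>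
                  {Inr (t, n) | t n. 1 \<le> t \<and> n < N})"
    and c1: "c1 > 0" and \<delta>: "\<delta> > 0"
    and astar: "astar \<in> profiles N M"
    and astar_unique: "\<And>a. a \<in> profiles N M \<Longrightarrow> a \<noteq> astar \<Longrightarrow>
                 objective N mu a < objective N mu astar"
    and J2_exists: "\<exists>a \<in> profiles N M. objective N mu a < J1 N M mu"
    and k: "1 \<le> k"
  defines "w \<equiv> (J1 N M mu - J2 N M mu)^2 /
             (real M * real N ^ 2 * (80 * (Max {\<sigma> n i | n i. n < N \<and> i < M})^2
               + 40 * Max {b n i | n i. n < N \<and> i < M} / real N * (J1 N M mu - J2 N M mu)))"
    and "Pe \<equiv> (\<lambda>j. err_event P N M A r (explore_turns c1 \<delta> j) astar)"
  shows "(measure P (Pe k)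
           \<le> 2 * N * M * exp (- w * c1 * (real k / 2) powr \<delta> * real k)
             + N * M * exp (- (c1 * (real k / 2) powr \<delta> / (36 * real M ^ 2)) * real k)) \<and>
         (measure P (\<Union>rr \<in> {0..k div 2}. Pe (k - rr))
           \<le> 2 * N * M / (1 - exp (- w * c1 * (real k / 4) powr \<delta>))
               * exp (- (w / 2) * c1 * (real k / 4) powr \<delta> * real k)
             + N * M / (1 - exp (- (1 / (36 * real M ^ 2)) * c1 * (real k / 4) powr \<delta>))
               * exp (- (1 / (72 * real M ^ 2)) * c1 * (real k / 4) powr \<delta> * real k))"
proof -
  interpret prob_space P by (rule P)
  note w_def = assms(23) and Pe_def = assms(24)
  have N1: "1 \<le> N" and NleM: "N \<le> M" using NM by auto
  have fin: "finite (profiles N M)" by (simp add: profiles_def finite_PiE)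
  have J1eq: "J1 N M mu = objective N mu astar"
    unfolding J1_def
  proof (rule Max_eqI)
    show "finite (objective N mu ` profiles N M)" using fin by simp
    show "objective N mu astar \<in> objective N mu ` profiles N M" using astar by simp
    fix y assume "y \<in> objective N mu ` profiles N M"
    then obtain b where b: "b \<in> profiles N M" "y = objective N mu b" by auto
    then show "y \<le> objective N mu astar" using astar_unique[of b] by (cases "b = astar") auto
  qed
  define S2 where "S2 = {objective N mu a | a. a \<in> profiles N M \<and> objective N mu a < J1 N M mu}"
  have J2eq: "J2 N M mu = Max S2" by (simp add: J2_def S2_def)
  have S2fin: "finite S2"
    by (rule finite_subset[of _ "objective N mu ` profiles N M"]) (use fin in \<open>auto simp: S2_def\<close>)
  have S2ne: "S2 \<noteq> {}" using J2_exists by (auto simp: S2_def)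
  have "J2 N M mu \<in> S2" unfolding J2eq by (rule Max_in[OF S2fin S2ne])
  then have J2lt: "J2 N M mu < J1 N M mu" by (auto simp: S2_def)
  have J2ge: "objective N mu a \<le> J2 N M mu" if "a \<in> profiles N M" "a \<noteq> astar" for a
  proof -
    have "objective N mu a \<in> S2" using astar_unique[OF that] that J1eq by (auto simp: S2_def)
    then show ?thesis unfolding J2eq by (rule Max_ge[OF S2fin])
  qed
  define \<Delta> where "\<Delta> = J1 N M mu - J2 N M mu"
  have \<Delta>: "0 < \<Delta>" using J2lt by (simp add: \<Delta>_def)
  have M2: "2 \<le> M"
  proof (rule ccontr)
    assume "\<not> 2 \<le> M"
    then have M1: "M \<le> 1" by simp
    obtain a where a: "a \<in> profiles N M" "objective N mu a < J1 N M mu" using J2_exists by auto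
    have "a = astar"
    proof (rule PiE_ext)
      show "a \<in> PiE {0..<N} (\<lambda>_. {0..<M})" using a by (simp add: profiles_def)
      show "astar \<in> PiE {0..<N} (\<lambda>_. {0..<M})" using astar by (simp add: profiles_def)
      fix n assume "n \<in> {0..<N}"
      then have "a n < M" "astar n < M" using a astar by (auto simp: profiles_def PiE_def Pi_def)
      then show "a n = astar n" using M1 by simp
    qed
    then show False using a J1eq by simp
  qed
  have sigpos: "\<sigma> n i ^ 2 > 0" if ni: "n < N" "i < M" for n i
  proof (rule ccontr)
    assume "\<not> \<sigma> n i ^ 2 > 0"
    then have s0: "\<sigma> n i ^ 2 = 0" by (simp add: not_less)
    have t1: "(1::nat) \<le> 1" by simp
    have int: "integrable P (\<lambda>\<omega>. (r n i 1 \<omega> - mu n i)^2)" and i0: "(\<integral>\<omega>. (r n i 1 \<omega> - mu n i)^2 \<partial>P) = 0"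
      using r_var[OF ni t1] s0 by auto
    have "AE \<omega> in P. (r n i 1 \<omega> - mu n i)^2 = 0"
      using integral_nonneg_eq_0_iff_AE[OF int] i0 by simp
    then have ae: "AE \<omega> in P. r n i 1 \<omega> = mu n i" by simp
    have rm: "r n i 1 \<in> borel_measurable P" using r_rv[OF ni t1] .
    have ms: "{\<omega> \<in> space P. r n i 1 \<omega> = mu n i} \<in> sets P" using rm by measurable
    have "measure P {\<omega> \<in> space P. r n i 1 \<omega> = mu n i} = 1"
      using prob_Collect_eq_1[OF ms] ae by simp
    then show False using r_cont[OF ni t1, of "mu n i"] by simp
  qed
  define x where "x = \<Delta> / (2 * real N)"
  have x: "0 < x" using \<Delta> N1 by (simp add: x_def)
  define Smax where "Smax = Max {\<sigma> n i | n i. n < N \<and> i < M}"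
  define Bmax where "Bmax = Max {b n i | n i. n < N \<and> i < M}"
  have finfam: "finite {f n i | n i. n < N \<and> i < M}" for f :: "nat \<Rightarrow> nat \<Rightarrow> real"
  proof -
    have "{f n i | n i. n < N \<and> i < M} = (\<lambda>(n, i). f n i) ` ({..<N} \<times> {..<M})" by auto
    then show ?thesis by simp
  qed
  have sle: "\<sigma> n i \<le> Smax" if "n < N" "i < M" for n i
    unfolding Smax_def by (rule Max_ge[OF finfam]) (use that in auto)
  have ble: "b n i \<le> Bmax" if "n < N" "i < M" for n i
    unfolding Bmax_def by (rule Max_ge[OF finfam]) (use that in auto)
  have N0M0: "0 < N" "0 < M" using N1 NleM by auto
  have Smax0: "0 \<le> Smax" using sle[OF N0M0] \<sigma>_nonneg[OF N0M0] by linarith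
  have Bmax0: "0 < Bmax" using ble[OF N0M0] b_pos[OF N0M0] by linarith
  define \<eta>s where "\<eta>s = x^2 / (2 * (Smax^2 + Bmax * x))"
  have Dpos: "0 < Smax^2 + Bmax * x" using Bmax0 x by (simp add: add_nonneg_pos)
  have \<eta>s: "0 < \<eta>s" using Dpos x by (simp add: \<eta>s_def)
  have \<Delta>x: "\<Delta> = 2 * real N * x" using N1 by (simp add: x_def)
  have weq: "w = \<eta>s / (10 * real M)"
    unfolding w_def \<Delta>_def[symmetric] Smax_def[symmetric] Bmax_def[symmetric] \<eta>s_def \<Delta>x
  proof -
    have nz: "real N \<noteq> 0" "real M \<noteq> 0" "Smax^2 + Bmax * x \<noteq> 0" using N0M0 Dpos by auto
    show "(2 * real N * x)\<^sup>2 / (real M * (real N)\<^sup>2 * (80 * Smax\<^sup>2 + 40 * Bmax / real N * (2 * real N * x))) =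
      x\<^sup>2 / (2 * (Smax\<^sup>2 + Bmax * x)) / (10 * real M)"
    proof -
      have e1: "(2 * real N * x)\<^sup>2 = (4 * (real N)\<^sup>2) * x\<^sup>2" by (simp add: power2_eq_square)
      have e2: "real M * (real N)\<^sup>2 * (80 * Smax\<^sup>2 + 40 * Bmax / real N * (2 * real N * x))
          = (4 * (real N)\<^sup>2) * (20 * real M * (Smax\<^sup>2 + Bmax * x))"
        using nz by (simp add: field_simps)
      have e3: "x\<^sup>2 / (2 * (Smax\<^sup>2 + Bmax * x)) / (10 * real M) = x\<^sup>2 / (20 * real M * (Smax\<^sup>2 + Bmax * x))"
        by (simp add: field_simps)
      show ?thesis unfolding e1 e2 e3 using nz by (subst mult_divide_mult_cancel_left) auto
    qed
  qed
  have \<eta>le: "\<eta>s \<le> x^2 / (2 * (\<sigma> n i ^ 2 + b n i * x))" if ni: "n < N" "i < M" for n i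
  proof -
    have "\<sigma> n i ^ 2 \<le> Smax ^ 2" using sle[OF ni] \<sigma>_nonneg[OF ni] by (intro power_mono) auto
    moreover have "b n i * x \<le> Bmax * x" using ble[OF ni] x by (intro mult_right_mono) auto
    moreover have "0 < \<sigma> n i ^ 2 + b n i * x" using sigpos[OF ni] b_pos[OF ni] x by (simp add: add_pos_pos)
    ultimately show ?thesis unfolding \<eta>s_def
      by (intro divide_left_mono) (auto intro!: mult_pos_pos)
  qed
  define I3 where "I3 = {..<N} \<times> {..<M} \<times> {1::real, -1}"
  define Dev where "Dev j n i s = {\<omega> \<in> space P. 0 \<le> (\<Sum>t\<in>{1..explore_turns c1 \<delta> j}. Sv A N n i t \<omega> * (s * (r n i t \<omega> - mu n i) - x))}"
    for j n i and s :: real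
  define Dall where "Dall j = (\<Union>p\<in>I3. case p of (n, i, s) \<Rightarrow> Dev j n i s)" for j
  have I3fin: "finite I3" by (simp add: I3_def)
  have I3card: "card I3 = N * M * 2" by (simp add: I3_def card_cartesian_product)
  have Dev_sets: "Dev j n i s \<in> sets P" if "n < N" "i < M" for j n i s
  proof -
    have "(\<lambda>\<omega>. \<Sum>t\<in>{1..explore_turns c1 \<delta> j}. Sv A N n i t \<omega> * (s * (r n i t \<omega> - mu n i) - x)) \<in> borel_measurable P"
    proof (rule borel_measurable_sum)
      fix t assume t: "t \<in> {1..explore_turns c1 \<delta> j}"
      have [measurable]: "Sv A N n i t \<in> borel_measurable P" by (rule Sv_meas) (use A_rv t in auto)
      have [measurable]: "r n i t \<in> borel_measurable P" using r_rv that t by auto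
      show "(\<lambda>\<omega>. Sv A N n i t \<omega> * (s * (r n i t \<omega> - mu n i) - x)) \<in> borel_measurable P" by measurable
    qed
    then show ?thesis unfolding Dev_def by measurable
  qed
  have Dall_sets: "Dall j \<in> sets P" for j
    unfolding Dall_def using I3fin by (intro sets.finite_UN) (auto simp: I3_def intro!: Dev_sets)
  have sub: "Pe j \<subseteq> Dall j" for j
  proof
    fix \<omega> assume \<omega>: "\<omega> \<in> Pe j"
    define T where "T = explore_turns c1 \<delta> j"
    define em where "em = (\<lambda>n i. emp_mean N A r T n i \<omega>)"
    have sp: "\<omega> \<in> space P" using \<omega> by (simp add: Pe_def err_event_def)
    obtain a where a: "a \<in> profiles N M" "a \<noteq> astar"
      and amax: "\<And>b. b \<in> profiles N M \<Longrightarrow> objective N em b \<le> objective N em a"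
      using \<omega> unfolding Pe_def err_event_def em_def T_def by blast
    show "\<omega> \<in> Dall j"
    proof (rule ccontr)
      assume nd: "\<omega> \<notin> Dall j"
      have neg: "(\<Sum>t\<in>{1..T}. Sv A N n i t \<omega> * (s * (r n i t \<omega> - mu n i) - x)) < 0"
        if "n < N" "i < M" "s = 1 \<or> s = -1" for n i s
      proof (rule ccontr)
        assume "\<not> ?thesis"
        then have "\<omega> \<in> Dev j n i s" using sp by (simp add: Dev_def T_def)
        moreover have "(n, i, s) \<in> I3" using that by (auto simp: I3_def)
        ultimately show False using nd unfolding Dall_def by blast
      qed
      have close: "\<bar>em n i - mu n i\<bar> < x" if ni: "n < N" "i < M" for n i
      proof -
        let ?S = "solo_turns N A T n i \<omega>"
        have Sfin: "finite ?S" by (simp add: solo_turns_def)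
        have h1: "(\<Sum>t\<in>?S. 1 * (r n i t \<omega> - mu n i) - x) < 0"
        proof -
          have eq: "(\<Sum>t\<in>{1..T}. Sv A N n i t \<omega> * (1 * (r n i t \<omega> - mu n i) - x)) = (\<Sum>t\<in>?S. 1 * (r n i t \<omega> - mu n i) - x)"
            by (rule sum_Sv[OF ni(1)])
          show ?thesis using neg[OF ni disjI1[OF refl]] by (simp only: eq)
        qed
        have h2: "(\<Sum>t\<in>?S. -1 * (r n i t \<omega> - mu n i) - x) < 0"
        proof -
          have eq: "(\<Sum>t\<in>{1..T}. Sv A N n i t \<omega> * (-1 * (r n i t \<omega> - mu n i) - x)) = (\<Sum>t\<in>?S. -1 * (r n i t \<omega> - mu n i) - x)"
            by (rule sum_Sv[OF ni(1)])
          show ?thesis using neg[OF ni disjI2[OF refl]] by (simp only: eq)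
        qed
        show ?thesis using emp_close[OF Sfin x h1 h2] by (simp add: em_def emp_mean_def)
      qed
      have ca: "\<bar>objective N em a - objective N mu a\<bar> < real N * x"
        by (rule obj_close[OF close a(1) N1])
      have cs: "\<bar>objective N em astar - objective N mu astar\<bar> < real N * x"
        by (rule obj_close[OF close astar N1])
      have "objective N mu a \<le> J1 N M mu - \<Delta>" using J2ge[OF a] by (simp add: \<Delta>_def)
      moreover have "real N * x = \<Delta> / 2" using N1 by (simp add: x_def)
      ultimately have "objective N em a < objective N em astar" using ca cs J1eq by linarith
      then show False using amax[OF astar] by simp
    qed
  qed
  define E0 where "E0 j = exp (- real (explore_turns c1 \<delta> j) * (1 - exp (- \<eta>s)) / (3 * real M))" for j
  have Dev_le: "measure P (Dev j n i s) \<le> E0 j" if ni: "n < N" "i < M" and s: "s = 1 \<or> s = -1" for j n i s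
  proof -
    have "measure P (Dev j n i s) \<le> exp (- real (explore_turns c1 \<delta> j) * (1 - exp (- (x^2 / (2 * (\<sigma> n i ^ 2 + b n i * x))))) / (3 * real M))"
      unfolding Dev_def
      by (rule dev_bound[OF P N1 NleM M2 r_rv r_mean r_var b_pos bernstein A_rv A_unif indep ni s x sigpos[OF ni]])
    also have "\<dots> \<le> E0 j" unfolding E0_def
    proof (intro exp_mono divide_right_mono mult_left_mono_neg)
      show "1 - exp (- \<eta>s) \<le> 1 - exp (- (x^2 / (2 * (\<sigma> n i ^ 2 + b n i * x))))"
        using \<eta>le[OF ni] by simp
    qed auto
    finally show ?thesis .
  qed
  have mDall: "measure P (Dall j) \<le> 2 * real N * real M * E0 j" for j
  proof -
    have "measure P (Dall j) \<le> (\<Sum>p\<in>I3. measure P (case p of (n, i, s) \<Rightarrow> Dev j n i s))"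
      unfolding Dall_def by (rule measure_UNION_le[OF I3fin]) (auto simp: I3_def intro!: Dev_sets)
    also have "\<dots> \<le> real (card I3) * E0 j"
      by (rule sum_bounded_above) (auto simp: I3_def intro!: Dev_le)
    finally show ?thesis by (simp add: I3card)
  qed
  have core: "measure P (Dall j) \<le> 2 * real N * real M * exp (- w * (c1 * (real j / 2) powr \<delta> * real j))
      + real N * real M * exp (- ((c1 * (real j / 2) powr \<delta> * real j) / (36 * real M ^ 2)))" for j
  proof (rule final_ineq[OF \<eta>s M2 N1 _ _ weq])
    show "c1 * (real j / 2) powr \<delta> * real j / 2 \<le> real (explore_turns c1 \<delta> j)"
      by (rule explore_lower[OF c1 \<delta>])
    show "0 \<le> c1 * (real j / 2) powr \<delta> * real j" using c1 by simp
    show "measure P (Dall j) \<le> 1" by simp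
    show "measure P (Dall j) \<le> 2 * real N * real M * exp (- real (explore_turns c1 \<delta> j) * (1 - exp (- \<eta>s)) / (3 * real M))"
      using mDall[of j] by (simp add: E0_def)
  qed
  have claim1: "measure P (Pe k) \<le> 2 * real N * real M * exp (- w * c1 * (real k / 2) powr \<delta> * real k)
      + real N * real M * exp (- (c1 * (real k / 2) powr \<delta> / (36 * real M ^ 2)) * real k)"
  proof -
    have "measure P (Pe k) \<le> measure P (Dall k)" by (rule finite_measure_mono[OF sub Dall_sets])
    also have "\<dots> \<le> 2 * real N * real M * exp (- w * (c1 * (real k / 2) powr \<delta> * real k))
      + real N * real M * exp (- ((c1 * (real k / 2) powr \<delta> * real k) / (36 * real M ^ 2)))" by (rule core)
    also have "- w * (c1 * (real k / 2) powr \<delta> * real k) = - w * c1 * (real k / 2) powr \<delta> * real k" by simp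
    also have "- ((c1 * (real k / 2) powr \<delta> * real k) / (36 * real M ^ 2)) = - (c1 * (real k / 2) powr \<delta> / (36 * real M ^ 2)) * real k"
      by simp
    finally show ?thesis .
  qed
  define \<alpha> where "\<alpha> = w * c1 * (real k / 4) powr \<delta>"
  define \<beta> where "\<beta> = c1 * (real k / 4) powr \<delta> / (36 * real M ^ 2)"
  have w0: "0 < w" using weq \<eta>s N0M0 by simp
  have kpos: "0 < (real k / 4) powr \<delta>" using k by simp
  have \<alpha>: "0 < \<alpha>" using w0 c1 kpos by (simp add: \<alpha>_def)
  have \<beta>: "0 < \<beta>" using c1 kpos N0M0 by (simp add: \<beta>_def)
  have q: "2 * (k div 2) \<le> k" by simp
  have term_le: "measure P (Dall (k - rr)) \<le> 2 * real N * real M * exp (- \<alpha> * real (k - rr)) + real N * real M * exp (- \<beta> * real (k - rr))"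
    if rr: "rr \<in> {0..k div 2}" for rr
  proof -
    define j where "j = k - rr"
    have jk: "real k / 4 \<le> real j / 2" using rr by (simp add: j_def of_nat_diff)
    have pj: "(real k / 4) powr \<delta> \<le> (real j / 2) powr \<delta>" using jk \<delta> by (intro powr_mono2) auto
    have e1: "exp (- w * (c1 * (real j / 2) powr \<delta> * real j)) \<le> exp (- \<alpha> * real j)"
    proof -
      have "\<alpha> * real j \<le> w * (c1 * (real j / 2) powr \<delta> * real j)"
        unfolding \<alpha>_def using pj w0 c1 by (simp add: mult_left_mono mult_right_mono mult.assoc)
      then show ?thesis by simp
    qed
    have e2: "exp (- ((c1 * (real j / 2) powr \<delta> * real j) / (36 * real M ^ 2))) \<le> exp (- \<beta> * real j)"
    proof -
      have "\<beta> * real j \<le> (c1 * (real j / 2) powr \<delta> * real j) / (36 * real M ^ 2)"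
        unfolding \<beta>_def using pj c1 by (simp add: divide_right_mono mult_left_mono mult_right_mono)
      then show ?thesis by simp
    qed
    have "measure P (Dall j) \<le> 2 * real N * real M * exp (- w * (c1 * (real j / 2) powr \<delta> * real j))
      + real N * real M * exp (- ((c1 * (real j / 2) powr \<delta> * real j) / (36 * real M ^ 2)))" by (rule core)
    also have "\<dots> \<le> 2 * real N * real M * exp (- \<alpha> * real j) + real N * real M * exp (- \<beta> * real j)"
      using e1 e2 by (intro add_mono mult_left_mono) auto
    finally show ?thesis by (simp add: j_def)
  qed
  have claim2: "measure P (\<Union>rr\<in>{0..k div 2}. Pe (k - rr)) \<le>
      2 * real N * real M * (exp (- \<alpha> * real k / 2) / (1 - exp (- \<alpha>)))
      + real N * real M * (exp (- \<beta> * real k / 2) / (1 - exp (- \<beta>)))"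
  proof -
    have "measure P (\<Union>rr\<in>{0..k div 2}. Pe (k - rr)) \<le> measure P (\<Union>rr\<in>{0..k div 2}. Dall (k - rr))"
      by (rule finite_measure_mono) (use sub Dall_sets in auto)
    also have "\<dots> \<le> (\<Sum>rr\<in>{0..k div 2}. measure P (Dall (k - rr)))"
      by (rule measure_UNION_le) (auto intro: Dall_sets)
    also have "\<dots> \<le> (\<Sum>rr\<in>{0..k div 2}. 2 * real N * real M * exp (- \<alpha> * real (k - rr)) + real N * real M * exp (- \<beta> * real (k - rr)))"
      by (rule sum_mono[OF term_le])
    also have "\<dots> = 2 * real N * real M * (\<Sum>rr\<in>{0..k div 2}. exp (- \<alpha> * real (k - rr)))
        + real N * real M * (\<Sum>rr\<in>{0..k div 2}. exp (- \<beta> * real (k - rr)))"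
      by (simp add: sum.distrib sum_distrib_left)
    also have "\<dots> \<le> 2 * real N * real M * (exp (- \<alpha> * real k / 2) / (1 - exp (- \<alpha>)))
      + real N * real M * (exp (- \<beta> * real k / 2) / (1 - exp (- \<beta>)))"
      by (intro add_mono mult_left_mono geo_tail[OF \<alpha> q] geo_tail[OF \<beta> q]) auto
    finally show ?thesis .
  qed
  have a1: "exp (- \<alpha> * real k / 2) = exp (- (w / 2) * c1 * (real k / 4) powr \<delta> * real k)"
    by (simp add: \<alpha>_def)
  have a2: "exp (- \<alpha>) = exp (- w * c1 * (real k / 4) powr \<delta>)" by (simp add: \<alpha>_def)
  have b1: "exp (- \<beta> * real k / 2) = exp (- (1 / (72 * real M ^ 2)) * c1 * (real k / 4) powr \<delta> * real k)"
    by (simp add: \<beta>_def)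
  have b2: "exp (- \<beta>) = exp (- (1 / (36 * real M ^ 2)) * c1 * (real k / 4) powr \<delta>)" by (simp add: \<beta>_def)
  have claim2': "measure P (\<Union>rr\<in>{0..k div 2}. Pe (k - rr)) \<le>
      2 * real N * real M / (1 - exp (- w * c1 * (real k / 4) powr \<delta>)) * exp (- (w / 2) * c1 * (real k / 4) powr \<delta> * real k)
      + real N * real M / (1 - exp (- (1 / (36 * real M ^ 2)) * c1 * (real k / 4) powr \<delta>))
         * exp (- (1 / (72 * real M ^ 2)) * c1 * (real k / 4) powr \<delta> * real k)"
    using claim2 unfolding a1 a2 b1 b2 by (simp add: mult.commute)
  show ?thesis using claim1 claim2' by simp
qed

end
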